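(* There exists a sequence $\{f_n\}_{n\ge1}\subset W^{1,\infty}(\mathbb{T}^2)$ of zero-average functions, bounded in $L^1(\mathbb{T}^2)$, and a constant $C>0$ such that $$\sup_{n\ge1}\mathbb{M}_{f_n}(r)\le\frac{C}{\sqrt{|\log r|}}\qquad\forall r\in\left(0,\tfrac12\right),$$ and $$\lim_{n\to\infty}\|f_n\|_{L^2}=\infty,\qquad 0<\liminf_{n\to\infty}S_n\le\limsup_{n\to\infty}S_n<\infty,\qquad\text{where } S_n:=\frac{\|f_n\|_{L^2}^2\sqrt[4]{\log\|\nabla f_n\|_{L^2}}}{\|\nabla f_n\|_{L^2}}.$$
   Context: $\mathbb{T}^2$ is the two-dimensional flat torus. For $f\in L^1(\mathbb{T}^2)$, $\mathbb{M}_f(r):=\sup_{x\in\mathbb{T}^2}\int_{B_r(x)}|f(y)|\,dy$, where $B_r(x)$ is the ball of radius $r$ in $\mathbb{T}^2$. *)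

theory Defs
  imports "HOL-Analysis.Analysis"
begin

text \<open>Functions on T^2 are
  represented as Z^2-periodic functions on R^2 = real \<times> real; integrals over
  T^2 are integrals over the fundamental domain [0,1]^2.\<close>

definition torus_periodic :: "(real \<times> real \<Rightarrow> 'b) \<Rightarrow> bool" where
  "torus_periodic f \<longleftrightarrow> (\<forall>a b. f (a + 1, b) = f (a, b) \<and> f (a, b + 1) = f (a, b))"

definition unit_square :: "(real \<times> real) set" where
  "unit_square = cbox (0, 0) (1, 1)"

text \<open>f in W^{1,infinity}(T^2) with (weak = a.e. classical) gradient g:
  f is periodic and Lipschitz, g is periodic and Borel measurable, and
  f is differentiable with gradient g x at almost every x.\<close>
definition W1inf_torus :: "(real \<times> real \<Rightarrow> real) \<Rightarrow> (real \<times> real \<Rightarrow> real \<times> real) \<Rightarrow> bool" where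
  "W1inf_torus f g \<longleftrightarrow> torus_periodic f \<and> torus_periodic g \<and>
     (\<exists>L. L\<ge>0 \<and> lipschitz_on L UNIV f) \<and>
     g \<in> borel_measurable lborel \<and>
     (AE x in lborel. (f has_derivative (\<lambda>h. g x \<bullet> h)) (at x))"

definition torus_L1 :: "(real \<times> real \<Rightarrow> real) \<Rightarrow> real" where
  "torus_L1 f = (LINT x:unit_square|lborel. \<bar>f x\<bar>)"

definition torus_L2 :: "(real \<times> real \<Rightarrow> real) \<Rightarrow> real" where
  "torus_L2 f = sqrt (LINT x:unit_square|lborel. (f x)\<^sup>2)"

definition torus_grad_L2 :: "(real \<times> real \<Rightarrow> real \<times> real) \<Rightarrow> real" where
  "torus_grad_L2 g = sqrt (LINT x:unit_square|lborel. (norm (g x))\<^sup>2)"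

text \<open>M_f(r) = sup_x \<integral>_{B_r(x)} |f|. For r < 1/2 the Euclidean ball of radius r
  projects injectively onto the torus ball, so for periodic f this equals the
  integral over the torus ball.\<close>
definition torusM :: "(real \<times> real \<Rightarrow> real) \<Rightarrow> real \<Rightarrow> real" where
  "torusM f r = (SUP x. (LINT y:ball x r|lborel. \<bar>f y\<bar>))"

end

theory Submission
  imports Defs
begin

definition sd :: "real \<Rightarrow> real" where "sd t = min (frac t) (1 - frac t)"
definition Tp :: "real \<Rightarrow> real \<Rightarrow> real" where "Tp d u = max 0 ((d - u) / d^2)"
definition W :: "real \<Rightarrow> real \<Rightarrow> real" where "W d t = Tp d (sd t)"
definition W' :: "real \<Rightarrow> real \<Rightarrow> real" where
  "W' d t = (if frac t < d then - 1 / d^2 else if 1 - d < frac t then 1 / d^2 else 0)"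

lemma sd_le_int: "sd x \<le> \<bar>x - of_int k\<bar>"
proof -
  have "frac x = x - of_int \<lfloor>x\<rfloor>" by (simp add: frac_def)
  moreover have "of_int \<lfloor>x\<rfloor> \<le> x" "x < of_int \<lfloor>x\<rfloor> + 1" by linarith+
  moreover have "k \<le> \<lfloor>x\<rfloor> \<or> k \<ge> \<lfloor>x\<rfloor> + 1" by linarith
  moreover have "k \<le> \<lfloor>x\<rfloor> \<Longrightarrow> real_of_int k \<le> of_int \<lfloor>x\<rfloor>" by simp
  moreover have "k \<ge> \<lfloor>x\<rfloor> + 1 \<Longrightarrow> real_of_int k \<ge> of_int \<lfloor>x\<rfloor> + 1" by (metis of_int_add of_int_le_iff of_int_1)
  ultimately show ?thesis unfolding sd_def by linarith
qed

lemma sd_attained: "\<exists>k::int. sd y = \<bar>y - of_int k\<bar>"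
proof -
  have f: "frac y = y - of_int \<lfloor>y\<rfloor>" by (simp add: frac_def)
  have "of_int \<lfloor>y\<rfloor> \<le> y" "y < of_int \<lfloor>y\<rfloor> + 1" by linarith+
  then show ?thesis unfolding sd_def f
    by (cases "y - of_int \<lfloor>y\<rfloor> \<le> 1 - (y - of_int \<lfloor>y\<rfloor>)")
       (rule exI[of _ "\<lfloor>y\<rfloor>"], simp, rule exI[of _ "\<lfloor>y\<rfloor>+1"], simp)
qed

lemma sd_lip: "\<bar>sd x - sd y\<bar> \<le> \<bar>x - y\<bar>"
proof -
  obtain k where k: "sd y = \<bar>y - of_int k\<bar>" using sd_attained by blast
  obtain l where l: "sd x = \<bar>x - of_int l\<bar>" using sd_attained by blast
  have "sd x \<le> \<bar>x - of_int k\<bar>" "sd y \<le> \<bar>y - of_int l\<bar>" by (rule sd_le_int)+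
  with k l show ?thesis by linarith
qed

lemma sd_nonneg: "sd x \<ge> 0" unfolding sd_def using frac_lt_1[of x] by simp

lemma W_nonneg: "W d t \<ge> 0" unfolding W_def Tp_def by simp

lemma W_le: assumes "d > 0" shows "W d t \<le> 1 / d"
proof -
  have "(d - sd t) / d^2 \<le> d / d^2" using sd_nonneg[of t] assms by (simp add: divide_right_mono)
  also have "d / d^2 = 1/d" by (simp add: power2_eq_square)
  finally show ?thesis unfolding W_def Tp_def using assms by simp
qed

lemma max0_lip: "\<bar>max 0 a - max 0 b\<bar> \<le> \<bar>a - b :: real\<bar>"
  by (auto split: split_max)

lemma W_lip: assumes "d > 0" shows "\<bar>W d x - W d y\<bar> \<le> \<bar>x - y\<bar> / d^2"
proof -
  have "\<bar>max 0 ((d - sd x) / d^2) - max 0 ((d - sd y) / d^2)\<bar> \<le> \<bar>(d - sd x) / d^2 - (d - sd y) / d^2\<bar>"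
    by (rule max0_lip)
  also have "\<dots> = \<bar>sd x - sd y\<bar> / d^2" proof -
    have "(d - sd x) / d^2 - (d - sd y) / d^2 = (sd y - sd x) / d^2" by (simp add: diff_divide_distrib)
    then show ?thesis using assms by (simp add: abs_minus_commute)
  qed
  also have "\<dots> \<le> \<bar>x - y\<bar> / d^2" using sd_lip[of x y] assms by (simp add: divide_right_mono)
  finally show ?thesis unfolding W_def Tp_def .
qed

lemma W_int_periodic: "W d (t + of_int k) = W d t"
  unfolding W_def sd_def by simp

lemma W'_int_periodic: "W' d (t + of_int k) = W' d t"
  unfolding W'_def by simp

lemma frac_shift: assumes "of_int k \<le> x" "x < of_int k + 1" shows "frac x = x - of_int k"
  using assms by (subst frac_unique_iff) auto

lemma W_deriv:
  assumes d: "0 < d" "d < 1/2" and ft: "frac t \<notin> {0, d, 1 - d}"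
  shows "(W d has_real_derivative W' d t) (at t)"
proof -
  define k where "k = \<lfloor>t\<rfloor>"
  have tk: "of_int k \<le> t" "t < of_int k + 1" unfolding k_def by linarith+
  have ftk: "frac t = t - of_int k" using frac_shift[OF tk] .
  consider "frac t < d" | "d < frac t" "frac t < 1 - d" | "1 - d < frac t" using ft by force
  then show ?thesis
  proof cases
    case 1
    let ?S = "{of_int k <..< of_int k + d}"
    have tS: "t \<in> ?S" using 1 ftk ft tk by auto
    have eq: "(d + of_int k) * (1/d^2) - x * (1/d^2) = W d x" if "x \<in> ?S" for x
    proof -
      have "frac x = x - of_int k" using that d by (intro frac_shift) auto
      then have "sd x = x - of_int k" using that d unfolding sd_def by auto
      moreover have "(d - (x - of_int k)) / d^2 \<ge> 0" using that d by auto
      ultimately have "W d x = (d - (x - of_int k)) / d^2" unfolding W_def Tp_def by simp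
      then show ?thesis by (simp add: diff_divide_distrib add_divide_distrib)
    qed
    have "((\<lambda>x. (d + of_int k) * (1/d^2) - x * (1/d^2)) has_real_derivative (- 1 / d^2)) (at t)"
      using d by (auto intro!: derivative_eq_intros simp: field_simps power2_eq_square)
    then have "(W d has_real_derivative (- 1 / d^2)) (at t)"
      by (rule has_field_derivative_transform_within_open[OF _ _ tS]) (use eq in auto)
    then show ?thesis using 1 unfolding W'_def by simp
  next
    case 2
    let ?S = "{of_int k + d <..< of_int k + 1 - d}"
    have tS: "t \<in> ?S" using 2 ftk tk by auto
    have eq: "0 = W d x" if "x \<in> ?S" for x
    proof -
      have "frac x = x - of_int k" using that d by (intro frac_shift) auto
      then have "sd x \<ge> d" using that d unfolding sd_def by auto
      then have "(d - sd x) / d^2 \<le> 0" using d by (intro divide_nonpos_pos) auto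
      then show ?thesis unfolding W_def Tp_def by simp
    qed
    have "((\<lambda>x. 0) has_real_derivative 0) (at t)"
      using d by (auto intro!: derivative_eq_intros simp: field_simps power2_eq_square)
    then have "(W d has_real_derivative 0) (at t)"
      by (rule has_field_derivative_transform_within_open[OF _ _ tS]) (use eq in auto)
    then show ?thesis using 2 unfolding W'_def by simp
  next
    case 3
    let ?S = "{of_int k + 1 - d <..< of_int k + 1}"
    have tS: "t \<in> ?S" using 3 ftk tk by auto
    have eq: "x * (1/d^2) + (d - 1 - of_int k) * (1/d^2) = W d x" if "x \<in> ?S" for x
    proof -
      have "frac x = x - of_int k" using that d by (intro frac_shift) auto
      then have "sd x = 1 - (x - of_int k)" using that d unfolding sd_def by auto
      moreover have "(d - (1 - (x - of_int k))) / d^2 \<ge> 0" using that d by auto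
      ultimately have "W d x = (d - (1 - (x - of_int k))) / d^2" unfolding W_def Tp_def by simp
      then show ?thesis by (simp add: diff_divide_distrib add_divide_distrib)
    qed
    have "((\<lambda>x. x * (1/d^2) + (d - 1 - of_int k) * (1/d^2)) has_real_derivative (1 / d^2)) (at t)"
      using d by (auto intro!: derivative_eq_intros simp: field_simps power2_eq_square)
    then have "(W d has_real_derivative (1 / d^2)) (at t)"
      by (rule has_field_derivative_transform_within_open[OF _ _ tS]) (use eq in auto)
    then show ?thesis using 3 d unfolding W'_def by simp
  qed
qed


lemma ftc_real:
  fixes F f :: "real \<Rightarrow> real"
  assumes "a \<le> b" "\<And>x. (F has_real_derivative f x) (at x)"
  shows "(f has_integral (F b - F a)) {a..b}"
  by (rule fundamental_theorem_of_calculus[OF assms(1)])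
     (auto simp: has_real_derivative_iff_has_vector_derivative[symmetric] intro: has_field_derivative_at_within assms(2))

lemma cube_deriv: "k \<noteq> 0 \<Longrightarrow> ((\<lambda>a::real. (a - c)^3/(3*k)) has_real_derivative ((x - c)^2/k)) (at x)"
  by (auto intro!: derivative_eq_intros simp: field_simps power2_eq_square eval_nat_numeral)

context fixes d :: real assumes d: "0 < d" "d < 1/2" begin

lemma W_piece1: "t \<in> {0..d} \<Longrightarrow> W d t = (d - t) / d^2"
proof -
  assume t: "t \<in> {0..d}"
  then have "frac t = t" using d by (intro frac_eq_id) auto
  then have "sd t = t" using t d unfolding sd_def by auto
  moreover have "(d - t) / d^2 \<ge> 0" using t d by auto
  ultimately show ?thesis unfolding W_def Tp_def by simp
qed

lemma W_piece2: "t \<in> {d..1-d} \<Longrightarrow> W d t = 0"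
proof -
  assume t: "t \<in> {d..1-d}"
  then have "frac t = t" using d by (intro frac_eq_id) auto
  then have "sd t \<ge> d" using t d unfolding sd_def by auto
  then have "(d - sd t) / d^2 \<le> 0" using d by (intro divide_nonpos_pos) auto
  then show ?thesis unfolding W_def Tp_def by simp
qed

lemma W_piece3: "t \<in> {1-d..1} \<Longrightarrow> W d t = (t - 1 + d) / d^2"
proof -
  assume t: "t \<in> {1-d..1}"
  have "sd t = 1 - t"
  proof (cases "t = 1")
    case True then show ?thesis unfolding sd_def by simp
  next
    case False
    then have "frac t = t" using t d by (intro frac_eq_id) auto
    then show ?thesis using t d unfolding sd_def by auto
  qed
  moreover have "(t - 1 + d) / d^2 \<ge> 0" using t d by auto
  ultimately have pos: "0 \<le> (t - 1 + d) / d^2" by simp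
  have e: "(d - sd t) / d^2 = (t - 1 + d) / d^2" using \<open>sd t = 1 - t\<close> by (simp add: algebra_simps)
  show ?thesis unfolding W_def Tp_def e by (rule max_absorb2[OF pos])
qed

lemma W'_piece1: "t \<in> {0..<d} \<Longrightarrow> W' d t = - 1 / d^2"
proof -
  assume t: "t \<in> {0..<d}"
  then have "frac t = t" using d by (intro frac_eq_id) auto
  then show ?thesis using t unfolding W'_def by simp
qed

lemma W'_piece2: "t \<in> {d..1-d} \<Longrightarrow> W' d t = 0"
proof -
  assume t: "t \<in> {d..1-d}"
  then have "frac t = t" using d by (intro frac_eq_id) auto
  then show ?thesis using t unfolding W'_def by simp
qed

lemma W'_piece3: "t \<in> {1-d<..1} \<Longrightarrow> (W' d t)^2 = 1 / d^4"
proof -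
  assume t: "t \<in> {1-d<..1}"
  show ?thesis
  proof (cases "t = 1")
    case True then show ?thesis using d unfolding W'_def by (simp add: power_divide power_mult[symmetric])
  next
    case False
    then have "frac t = t" using t d by (intro frac_eq_id) auto
    then show ?thesis using t d unfolding W'_def by (simp add: power_divide power_mult[symmetric])
  qed
qed

lemma int_W: "(W d has_integral 1) {0..1}"
proof -
  have "((\<lambda>t. (d - t) / d^2) has_integral ((\<lambda>t. (d*t - t^2/2)/d^2) d - (\<lambda>t. (d*t - t^2/2)/d^2) 0)) {0..d}"
    using d by (intro ftc_real) (auto intro!: derivative_eq_intros simp: field_simps power2_eq_square)
  then have i1: "(W d has_integral 1/2) {0..d}"
    using d by (subst has_integral_cong[OF W_piece1]) (auto simp: power2_eq_square field_simps)
  have i2: "(W d has_integral 0) {d..1-d}"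
    by (subst has_integral_cong[OF W_piece2]) auto
  have "((\<lambda>t. (t - 1 + d) / d^2) has_integral ((\<lambda>t. (t - 1 + d)^2/(2*d^2)) 1 - (\<lambda>t. (t - 1 + d)^2/(2*d^2)) (1-d))) {1-d..1}"
    using d by (intro ftc_real) (auto intro!: derivative_eq_intros simp: field_simps power2_eq_square)
  then have i3: "(W d has_integral 1/2) {1-d..1}"
    using d by (subst has_integral_cong[OF W_piece3]) (auto simp: power2_eq_square field_simps)
  have "(W d has_integral (1/2 + 0 + 1/2)) {0..1}"
    using d by (intro has_integral_combine[OF _ _ _ i3] has_integral_combine[OF _ _ i1 i2]) auto
  then show ?thesis by simp
qed

lemma int_W2: "((\<lambda>t. (W d t)^2) has_integral 2 / (3*d)) {0..1}"
proof -
  have "((\<lambda>t. ((d - t) / d^2)^2) has_integral ((\<lambda>t. (t - d)^3/(3*d^4)) d - (\<lambda>t. (t - d)^3/(3*d^4)) 0)) {0..d}"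
  proof (intro ftc_real)
    fix x
    have "((\<lambda>a::real. (a - d)^3/(3*d^4)) has_real_derivative ((x - d)^2/d^4)) (at x)"
      using d by (intro cube_deriv) auto
    moreover have "(x - d)^2/d^4 = ((d - x) / d^2)^2" by (simp add: power_divide power_mult[symmetric] power2_commute)
    ultimately show "((\<lambda>t. (t - d)^3/(3*d^4)) has_real_derivative ((d - x) / d^2)^2) (at x)"
      by simp
  qed (use d in auto)
  moreover have "(\<lambda>t. (t - d)^3/(3*d^4)) d - (\<lambda>t. (t - d)^3/(3*d^4)) 0 = 1/(3*d)"
    using d by (simp add: field_simps eval_nat_numeral)
  ultimately have "((\<lambda>t. ((d - t) / d^2)^2) has_integral 1/(3*d)) {0..d}" by simp
  then have i1: "((\<lambda>t. (W d t)^2) has_integral 1/(3*d)) {0..d}"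
    by (subst has_integral_cong[of _ _ "\<lambda>t. ((d - t) / d^2)^2"]) (auto simp: W_piece1)
  have i2: "((\<lambda>t. (W d t)^2) has_integral 0) {d..1-d}"
    by (subst has_integral_cong[of _ _ "\<lambda>t. 0"]) (auto simp: W_piece2)
  have "((\<lambda>t. ((t - 1 + d) / d^2)^2) has_integral ((\<lambda>t. (t - 1 + d)^3/(3*d^4)) 1 - (\<lambda>t. (t - 1 + d)^3/(3*d^4)) (1-d))) {1-d..1}"
  proof (intro ftc_real)
    fix x
    have "((\<lambda>a::real. (a - (1-d))^3/(3*d^4)) has_real_derivative ((x - (1-d))^2/d^4)) (at x)"
      using d by (intro cube_deriv) auto
    moreover have "(x - (1-d))^2/d^4 = ((x - 1 + d) / d^2)^2" by (simp add: power_divide power_mult[symmetric] algebra_simps)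
    ultimately show "((\<lambda>t. (t - 1 + d)^3/(3*d^4)) has_real_derivative ((x - 1 + d) / d^2)^2) (at x)"
      by (simp add: algebra_simps)
  qed (use d in auto)
  moreover have "(\<lambda>t. (t - 1 + d)^3/(3*d^4)) 1 - (\<lambda>t. (t - 1 + d)^3/(3*d^4)) (1-d) = 1/(3*d)"
    using d by (simp add: field_simps eval_nat_numeral)
  ultimately have "((\<lambda>t. ((t - 1 + d) / d^2)^2) has_integral 1/(3*d)) {1-d..1}" by simp
  then have i3: "((\<lambda>t. (W d t)^2) has_integral 1/(3*d)) {1-d..1}"
    by (subst has_integral_cong[of _ _ "\<lambda>t. ((t - 1 + d) / d^2)^2"]) (auto simp: W_piece3)
  have "((\<lambda>t. (W d t)^2) has_integral (1/(3*d) + 0 + 1/(3*d))) {0..1}"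
    using d by (intro has_integral_combine[OF _ _ _ i3] has_integral_combine[OF _ _ i1 i2]) auto
  then show ?thesis by simp
qed

lemma int_W'2: "((\<lambda>t. (W' d t)^2) has_integral 2 / d^3) {0..1}"
proof -
  have c1: "((\<lambda>t. 1 / d^4) has_integral d * (1/d^4)) {0..d}"
    using has_integral_const_real[of "1/d^4" 0 d] d by simp
  have i1: "((\<lambda>t. (W' d t)^2) has_integral d * (1/d^4)) {0..d}"
    by (rule has_integral_spike_finite[of "{d}", OF _ _ c1])
       (auto simp: W'_piece1 power_divide power_mult[symmetric])
  have i2: "((\<lambda>t. (W' d t)^2) has_integral 0) {d..1-d}"
    by (subst has_integral_cong[of _ _ "\<lambda>t. 0"]) (auto simp: W'_piece2)
  have c3: "((\<lambda>t. 1 / d^4) has_integral d * (1/d^4)) {1-d..1}"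
    using has_integral_const_real[of "1/d^4" "1-d" 1] d by simp
  have i3: "((\<lambda>t. (W' d t)^2) has_integral d * (1/d^4)) {1-d..1}"
    by (rule has_integral_spike_finite[of "{1-d}", OF _ _ c3]) (auto simp: W'_piece3)
  have "((\<lambda>t. (W' d t)^2) has_integral (d * (1/d^4) + 0 + d * (1/d^4))) {0..1}"
    using d by (intro has_integral_combine[OF _ _ _ i3] has_integral_combine[OF _ _ i1 i2]) auto
  moreover have "d * (1/d^4) + 0 + d * (1/d^4) = 2 / d^3" using d by (simp add: field_simps power_eq_if)
  ultimately show ?thesis by simp
qed

end

lemma per_shift:
  fixes h :: "real \<Rightarrow> real"
  assumes per: "\<And>t k. h (t + of_int k) = h t" and I: "(h has_integral I) {0..1}"
  shows "(h has_integral I) {of_int k..of_int k + 1}"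
proof -
  have "((\<lambda>x. h (1 *\<^sub>R x + (- of_int k))) has_integral (I /\<^sub>R 1 ^ DIM(real)))
          (cbox ((0 - (- of_int k)) /\<^sub>R 1) ((1 - (- of_int k)) /\<^sub>R 1))"
    using I by (intro has_integral_affinity') auto
  moreover have "h (x + - of_int k) = h x" for x using per[of x "-k"] by simp
  ultimately show ?thesis by (simp add: add.commute)
qed

lemma per_int:
  fixes h :: "real \<Rightarrow> real"
  assumes per: "\<And>t k. h (t + of_int k) = h t" and I: "(h has_integral I) {0..1}"
  shows "(h has_integral (of_nat j * I)) {of_int k..of_int k + of_nat j}"
proof (induction j)
  case 0
  have "(h has_integral 0) {of_int k..of_int k::real}" using has_integral_refl(2)[of h "of_int k::real"] by simp
  then show ?case by simp
next
  case (Suc j)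
  have "(h has_integral I) {of_int (k + int j)..of_int (k + int j) + 1}"
    by (rule per_shift[OF per I])
  then have "(h has_integral I) {of_int k + of_nat j..of_int k + of_nat (Suc j)}"
    by (simp add: algebra_simps)
  from has_integral_combine[OF _ _ Suc this] show ?case
    by (simp add: algebra_simps)
qed

lemma per_scale:
  fixes h :: "real \<Rightarrow> real"
  assumes per: "\<And>t k. h (t + of_int k) = h t" and I: "(h has_integral I) {0..1}" and N: "N > 0"
  shows "((\<lambda>x. h (real N * x)) has_integral (of_nat j * I / real N)) {of_int k / real N..(of_int k + of_nat j) / real N}"
proof -
  have "((\<lambda>x. h (real N *\<^sub>R x + 0)) has_integral ((of_nat j * I) /\<^sub>R real N ^ DIM(real)))
          (cbox ((of_int k - 0) /\<^sub>R real N) ((of_int k + of_nat j - 0) /\<^sub>R real N))"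
    using per_int[OF per I] N by (intro has_integral_affinity') auto
  then show ?thesis by (simp add: divide_inverse mult.commute)
qed


definition U :: "nat \<Rightarrow> real \<Rightarrow> real \<Rightarrow> real" where "U N d x = W d (real N * x)"
definition U' :: "nat \<Rightarrow> real \<Rightarrow> real \<Rightarrow> real" where "U' N d x = real N * W' d (real N * x)"

context fixes N :: nat and d :: real assumes N: "N > 0" and d: "0 < d" "d < 1/2" begin

lemma U_nonneg: "U N d x \<ge> 0" unfolding U_def by (rule W_nonneg)
lemma U_le: "U N d x \<le> 1/d" unfolding U_def using W_le d by auto

lemma U_lip: "\<bar>U N d x - U N d y\<bar> \<le> (real N / d^2) * \<bar>x - y\<bar>"
proof -
  have "\<bar>U N d x - U N d y\<bar> \<le> \<bar>real N * x - real N * y\<bar> / d^2" unfolding U_def using W_lip d by auto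
  also have "\<dots> = (real N / d^2) * \<bar>x - y\<bar>" by (simp add: abs_mult right_diff_distrib[symmetric])
  finally show ?thesis .
qed

lemma U_cont: "continuous_on A (U N d)"
proof -
  have "lipschitz_on (real N / d^2) A (U N d)"
    unfolding lipschitz_on_def using U_lip d by (auto simp: dist_real_def)
  then show ?thesis by (rule lipschitz_on_continuous_on)
qed

lemma U_meas: "U N d \<in> borel_measurable borel"
  using U_cont[of UNIV] by (rule borel_measurable_continuous_onI)

lemma frac_meas: "(frac :: real \<Rightarrow> real) \<in> borel_measurable borel"
proof -
  have e: "frac = (\<lambda>x::real. x - real_of_int \<lfloor>x\<rfloor>)" by (auto simp: frac_def)
  show ?thesis unfolding e by measurable
qed

lemma U'_meas: "U' N d \<in> borel_measurable borel"
  unfolding U'_def W'_def using frac_meas by measurable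

lemma U_per: "U N d (x + 1) = U N d x"
proof -
  have "U N d (x + 1) = W d (real N * x + of_int (int N))" unfolding U_def by (simp add: algebra_simps)
  then show ?thesis unfolding U_def by (simp only: W_int_periodic)
qed

lemma U'_per: "U' N d (x + 1) = U' N d x"
proof -
  have "U' N d (x + 1) = real N * W' d (real N * x + of_int (int N))" unfolding U'_def by (simp add: algebra_simps)
  then show ?thesis unfolding U'_def by (simp only: W'_int_periodic)
qed

lemma U_deriv: assumes "frac (real N * x) \<notin> {0, d, 1 - d}"
  shows "(U N d has_real_derivative U' N d x) (at x)"
proof -
  have "((\<lambda>x. W d (real N * x)) has_real_derivative (W' d (real N * x) * real N)) (at x)"
    by (rule DERIV_chain2[where g="\<lambda>x. real N * x", OF W_deriv[OF d assms]]) (auto intro!: derivative_eq_intros)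
  then show ?thesis unfolding U_def[abs_def] U'_def by (simp add: mult.commute)
qed

lemma U_int: "(U N d has_integral 1) {0..1}"
  using per_scale[of "W d", OF W_int_periodic int_W[OF d] N, of N 0] N unfolding U_def[abs_def] by simp

lemma U2_int: "((\<lambda>x. (U N d x)^2) has_integral 2 / (3*d)) {0..1}"
  using per_scale[of "\<lambda>t. (W d t)^2", OF _ int_W2[OF d] N, of N 0] N W_int_periodic unfolding U_def[abs_def] by simp

lemma U'2_int: "((\<lambda>x. (U' N d x)^2) has_integral (real N)^2 * (2 / d^3)) {0..1}"
proof -
  have "((\<lambda>x. (W' d (real N * x))^2) has_integral 2 / d^3) {0..1}"
    using per_scale[of "\<lambda>t. (W' d t)^2", OF _ int_W'2[OF d] N, of N 0] N W'_int_periodic by simp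
  then have "((\<lambda>x. (real N)^2 * (W' d (real N * x))^2) has_integral (real N)^2 * (2 / d^3)) {0..1}"
    by (rule has_integral_mult_right)
  then show ?thesis unfolding U'_def by (simp add: power_mult_distrib)
qed

lemma U_integrable: "U N d integrable_on {a..b}"
  by (rule integrable_continuous_real[OF U_cont])

lemma U_bound1: assumes "a \<le> b" shows "integral {a..b} (U N d) \<le> (b - a) / d"
proof -
  have "integral {a..b} (U N d) \<le> integral {a..b} (\<lambda>x. 1/d)"
    using U_le by (intro integral_le U_integrable) auto
  then show ?thesis using assms by simp
qed

lemma U_bound2: assumes "a \<le> b" shows "integral {a..b} (U N d) \<le> (b - a) + 2 / real N"
proof -
  define k where "k = \<lfloor>real N * a\<rfloor>"
  define j where "j = nat \<lceil>real N * (b - a)\<rceil> + 1"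
  have Np: "real N > 0" using N by simp
  have k1: "of_int k \<le> real N * a" "real N * a < of_int k + 1" unfolding k_def by linarith+
  have c1: "real N * (b - a) \<le> of_int \<lceil>real N * (b - a)\<rceil>" "of_int \<lceil>real N * (b - a)\<rceil> < real N * (b - a) + 1"
    by linarith+
  have "0 \<le> real N * (b - a)" using assms Np by simp
  then have nn: "\<lceil>real N * (b - a)\<rceil> \<ge> 0" by simp
  have jv: "real j = of_int \<lceil>real N * (b - a)\<rceil> + 1" unfolding j_def using nn by simp
  have lo: "of_int k / real N \<le> a" using k1 Np by (simp add: divide_le_eq mult.commute)
  have "real N * (b - a) = real N * b - real N * a" by (simp add: algebra_simps)
  then have "real N * b \<le> of_int k + real j" using k1 c1 jv by linarith
  then have hi: "b \<le> (of_int k + real j) / real N" using Np by (simp add: le_divide_eq mult.commute)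
  have int: "(U N d has_integral (real j * 1 / real N)) {of_int k / real N..(of_int k + real j) / real N}"
    using per_scale[of "W d", OF W_int_periodic int_W[OF d] N, of j k] unfolding U_def[abs_def] by simp
  have "integral {a..b} (U N d) \<le> integral {of_int k / real N..(of_int k + real j) / real N} (U N d)"
    using lo hi U_nonneg by (intro integral_subset_le U_integrable) auto
  also have "\<dots> = real j / real N" using int by (simp add: integral_unique)
  also have "\<dots> \<le> (real N * (b - a) + 2) / real N" using jv c1 Np by (simp add: divide_right_mono)
  also have "\<dots> = (b - a) + 2 / real N" using Np by (simp add: field_simps)
  finally show ?thesis .
qed

lemma U_exc_countable: "countable {x. frac (real N * x) \<in> {0, d, 1 - d}}"
proof -
  have "{x. frac (real N * x) \<in> {0, d, 1 - d}} \<subseteq> (\<lambda>(k, c). (of_int k + c) / real N) ` (UNIV \<times> {0, d, 1 - d})"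
  proof
    fix x assume x: "x \<in> {x. frac (real N * x) \<in> {0, d, 1 - d}}"
    have "x = (of_int \<lfloor>real N * x\<rfloor> + frac (real N * x)) / real N"
      using N by (simp add: frac_def)
    then show "x \<in> (\<lambda>(k, c). (of_int k + c) / real N) ` (UNIV \<times> {0, d, 1 - d})"
      using x by (intro image_eqI[of _ _ "(\<lfloor>real N * x\<rfloor>, frac (real N * x))"]) auto
  qed
  moreover have "countable ((\<lambda>(k, c). (of_int k + c) / real N) ` ((UNIV::int set) \<times> {0, d, 1 - d}))"
    by (intro countable_image countable_SIGMA) auto
  ultimately show ?thesis by (rule countable_subset)
qed

end

lemma meas_fst: "u \<in> borel_measurable borel \<Longrightarrow> (\<lambda>z::real\<times>real. u (fst z)) \<in> borel_measurable borel"
proof -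
  assume u: "u \<in> borel_measurable borel"
  have "(fst :: real\<times>real \<Rightarrow> real) \<in> borel_measurable borel"
    by (intro borel_measurable_continuous_onI continuous_on_fst continuous_on_id)
  from measurable_compose[OF this u] show ?thesis .
qed

lemma meas_snd: "u \<in> borel_measurable borel \<Longrightarrow> (\<lambda>z::real\<times>real. u (snd z)) \<in> borel_measurable borel"
proof -
  assume u: "u \<in> borel_measurable borel"
  have "(snd :: real\<times>real \<Rightarrow> real) \<in> borel_measurable borel"
    by (intro borel_measurable_continuous_onI continuous_on_snd continuous_on_id)
  from measurable_compose[OF this u] show ?thesis .
qed

lemma bnd_set_int:
  fixes h :: "'a::euclidean_space \<Rightarrow> real"
  assumes S: "S \<in> sets lborel" "emeasure lborel S < \<infinity>" and h: "h \<in> borel_measurable lborel"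
    and B: "\<And>x. \<bar>h x\<bar> \<le> B"
  shows "set_integrable lborel S h"
proof -
  have B0: "B \<ge> 0" using B[of undefined] by linarith
  have "integrable lborel (\<lambda>x. indicator S x * B)"
    using S by (intro integrable_mult_left integrable_real_indicator) auto
  then have "integrable lborel (\<lambda>x. indicator S x *\<^sub>R h x)"
    by (rule Bochner_Integration.integrable_bound)
       (use S h B B0 in \<open>auto simp: indicator_def\<close>)
  then show ?thesis unfolding set_integrable_def .
qed

lemma tensor:
  fixes u v :: "real \<Rightarrow> real"
  assumes u: "u \<in> borel_measurable borel" "\<And>x. \<bar>u x\<bar> \<le> Bu"
    and v: "v \<in> borel_measurable borel" "\<And>y. \<bar>v y\<bar> \<le> Bv"
  shows "set_integrable lborel (cbox (a, c) (b, e)) (\<lambda>z. u (fst z) * v (snd z))"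
    and "(LINT z:cbox (a, c) (b, e)|lborel. u (fst z) * v (snd z)) = integral {a..b} u * integral {c..e} v"
proof -
  have Bu: "Bu \<ge> 0" using u(2)[of 0] by linarith
  have Bv: "Bv \<ge> 0" using v(2)[of 0] by linarith
  have bnd: "\<bar>u (fst z) * v (snd z)\<bar> \<le> Bu * Bv" for z
    unfolding abs_mult by (intro mult_mono u v) (use Bu in auto)
  have meas: "(\<lambda>z::real\<times>real. u (fst z) * v (snd z)) \<in> borel_measurable lborel"
    using borel_measurable_times[OF meas_fst[OF u(1)] meas_snd[OF v(1)]] by simp
  show si: "set_integrable lborel (cbox (a, c) (b, e)) (\<lambda>z. u (fst z) * v (snd z))"
    by (rule bnd_set_int[OF _ emeasure_lborel_cbox_finite meas bnd]) auto
  have su: "set_integrable lborel {a..b} u"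
    by (rule bnd_set_int[OF _ _ _ u(2)]) (use u(1) emeasure_lborel_cbox_finite[of a b] in auto)
  have sv: "set_integrable lborel {c..e} v"
    by (rule bnd_set_int[OF _ _ _ v(2)]) (use v(1) emeasure_lborel_cbox_finite[of c e] in auto)
  define G where "G x = indicator {a..b} x * u x" for x
  define H where "H y = indicator {c..e} y * v y" for y
  have eqf: "indicator (cbox (a, c) (b, e)) z *\<^sub>R (u (fst z) * v (snd z)) = G (fst z) * H (snd z)" for z
    unfolding G_def H_def cbox_Pair_eq by (cases z) (simp add: indicator_times)
  have "integrable lborel (\<lambda>z::real\<times>real. G (fst z) * H (snd z))"
    using si unfolding set_integrable_def eqf .
  then have int2: "integrable (lborel \<Otimes>\<^sub>M lborel) (\<lambda>z::real\<times>real. G (fst z) * H (snd z))"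
    by (simp add: lborel_prod)
  have "(LINT z:cbox (a, c) (b, e)|lborel. u (fst z) * v (snd z)) = integral\<^sup>L lborel (\<lambda>z::real\<times>real. G (fst z) * H (snd z))"
    unfolding set_lebesgue_integral_def eqf ..
  also have "\<dots> = integral\<^sup>L (lborel \<Otimes>\<^sub>M lborel) (\<lambda>z::real\<times>real. G (fst z) * H (snd z))"
    by (simp add: lborel_prod)
  also have "\<dots> = (\<integral>x. (\<integral>y. G x * H y \<partial>lborel) \<partial>lborel)"
    using lborel_pair.integral_fst'[OF int2] by simp
  also have "\<dots> = integral\<^sup>L lborel G * integral\<^sup>L lborel H" by simp
  also have "integral\<^sup>L lborel G = integral {a..b} u"
    using set_borel_integral_eq_integral(2)[OF su] unfolding set_lebesgue_integral_def G_def by simp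
  also have "integral\<^sup>L lborel H = integral {c..e} v"
    using set_borel_integral_eq_integral(2)[OF sv] unfolding set_lebesgue_integral_def H_def by simp
  finally show "(LINT z:cbox (a, c) (b, e)|lborel. u (fst z) * v (snd z)) = integral {a..b} u * integral {c..e} v" .
qed


definition FF :: "nat \<Rightarrow> real \<Rightarrow> real \<times> real \<Rightarrow> real" where
  "FF N d z = U N d (fst z) * U N d (snd z) - 1"
definition GG :: "nat \<Rightarrow> real \<Rightarrow> real \<times> real \<Rightarrow> real \<times> real" where
  "GG N d z = (U' N d (fst z) * U N d (snd z), U N d (fst z) * U' N d (snd z))"

lemma null_fst: "countable E \<Longrightarrow> {z::real\<times>real. fst z \<in> E} \<in> null_sets lborel"
proof -
  assume E: "countable E"
  have "E \<times> (UNIV::real set) \<in> null_sets (lborel \<Otimes>\<^sub>M lborel)"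
    using countable_imp_null_set_lborel[OF E] by (intro lborel.times_in_null_sets1) auto
  moreover have "{z::real\<times>real. fst z \<in> E} = E \<times> UNIV" by auto
  ultimately show ?thesis by (simp add: lborel_prod)
qed

lemma null_snd: "countable E \<Longrightarrow> {z::real\<times>real. snd z \<in> E} \<in> null_sets lborel"
proof -
  assume E: "countable E"
  have "(UNIV::real set) \<times> E \<in> null_sets (lborel \<Otimes>\<^sub>M lborel)"
    using countable_imp_null_set_lborel[OF E] by (intro lborel.times_in_null_sets2) auto
  moreover have "{z::real\<times>real. snd z \<in> E} = UNIV \<times> E" by auto
  ultimately show ?thesis by (simp add: lborel_prod)
qed

context fixes N :: nat and d :: real assumes N: "N > 0" and d: "0 < d" "d < 1/2" begin

lemma U'_bound: "\<bar>U' N d x\<bar> \<le> real N / d^2"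
  unfolding U'_def W'_def using d by (auto simp: abs_mult)

lemma FF_lip: "lipschitz_on (2 * (1/d) * (real N / d^2)) UNIV (FF N d)"
proof -
  have L0: "0 \<le> real N / d^2" using d by simp
  have "\<bar>FF N d z - FF N d w\<bar> \<le> 2 * (1/d) * (real N / d^2) * dist z w" for z w
  proof -
    let ?a = "U N d (fst z)" and ?b = "U N d (snd z)" and ?c = "U N d (fst w)" and ?e = "U N d (snd w)"
    have "FF N d z - FF N d w = ?a * (?b - ?e) + ?e * (?a - ?c)" unfolding FF_def by (simp add: algebra_simps)
    then have "\<bar>FF N d z - FF N d w\<bar> \<le> ?a * \<bar>?b - ?e\<bar> + ?e * \<bar>?a - ?c\<bar>"
      using U_nonneg[OF N d] by (simp add: abs_mult abs_triangle_ineq[THEN order_trans])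
    also have "\<dots> \<le> (1/d) * ((real N / d^2) * dist z w) + (1/d) * ((real N / d^2) * dist z w)"
    proof (intro add_mono mult_mono)
      have "\<bar>snd z - snd w\<bar> \<le> dist z w" using dist_snd_le[of z w] by (simp add: dist_real_def)
      then show "\<bar>?b - ?e\<bar> \<le> real N / d^2 * dist z w"
        using U_lip[OF N d, of "snd z" "snd w"] L0 by (meson mult_left_mono order_trans)
      have "\<bar>fst z - fst w\<bar> \<le> dist z w" using dist_fst_le[of z w] by (simp add: dist_real_def)
      then show "\<bar>?a - ?c\<bar> \<le> real N / d^2 * dist z w"
        using U_lip[OF N d, of "fst z" "fst w"] L0 by (meson mult_left_mono order_trans)
    qed (use U_le[OF N d] U_nonneg[OF N d] d in auto)
    finally show ?thesis by simp
  qed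
  then show ?thesis unfolding lipschitz_on_def using d by (auto simp: dist_real_def)
qed

lemma GG_meas: "GG N d \<in> borel_measurable lborel"
proof -
  have m1: "(\<lambda>z::real\<times>real. U' N d (fst z) * U N d (snd z)) \<in> borel_measurable borel"
    using borel_measurable_times[OF meas_fst[OF U'_meas[OF N d]] meas_snd[OF U_meas[OF N d]]] by simp
  have m2: "(\<lambda>z::real\<times>real. U N d (fst z) * U' N d (snd z)) \<in> borel_measurable borel"
    using borel_measurable_times[OF meas_fst[OF U_meas[OF N d]] meas_snd[OF U'_meas[OF N d]]] by simp
  show ?thesis unfolding GG_def[abs_def] using borel_measurable_Pair[OF m1 m2] by simp
qed

lemma FF_deriv:
  assumes x: "frac (real N * fst z) \<notin> {0, d, 1 - d}" and y: "frac (real N * snd z) \<notin> {0, d, 1 - d}"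
  shows "(FF N d has_derivative (\<lambda>h. GG N d z \<bullet> h)) (at z)"
proof -
  have dx: "(U N d has_derivative (\<lambda>h. U' N d (fst z) * h)) (at (fst z))"
    using U_deriv[OF N d x] unfolding has_field_derivative_def .
  have dy: "(U N d has_derivative (\<lambda>h. U' N d (snd z) * h)) (at (snd z))"
    using U_deriv[OF N d y] unfolding has_field_derivative_def .
  have fx: "((\<lambda>w. U N d (fst w)) has_derivative (\<lambda>h. U' N d (fst z) * fst h)) (at z)"
    using has_derivative_compose[OF has_derivative_fst[OF has_derivative_ident] dx] by simp
  have fy: "((\<lambda>w. U N d (snd w)) has_derivative (\<lambda>h. U' N d (snd z) * snd h)) (at z)"
    using has_derivative_compose[OF has_derivative_snd[OF has_derivative_ident] dy] by simp
  have "((\<lambda>w. U N d (fst w) * U N d (snd w) - 1) has_derivative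
          (\<lambda>h. U N d (fst z) * (U' N d (snd z) * snd h) + (U' N d (fst z) * fst h) * U N d (snd z) - 0)) (at z)"
    by (intro has_derivative_diff has_derivative_mult fx fy has_derivative_const)
  then show ?thesis unfolding FF_def[abs_def] GG_def
    by (rule has_derivative_eq_rhs) (auto simp: algebra_simps fun_eq_iff)
qed

lemma FF_W1inf: "W1inf_torus (FF N d) (GG N d)"
  unfolding W1inf_torus_def
proof (intro conjI)
  show "torus_periodic (FF N d)" unfolding torus_periodic_def FF_def using U_per[OF N d] by simp
  show "torus_periodic (GG N d)" unfolding torus_periodic_def GG_def using U_per[OF N d] U'_per[OF N d] by simp
  show "\<exists>L\<ge>0. lipschitz_on L UNIV (FF N d)" using FF_lip d by (intro exI[of _ "2 * (1/d) * (real N / d^2)"]) auto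
  show "GG N d \<in> borel_measurable lborel" by (rule GG_meas)
  define E where "E = {x. frac (real N * x) \<in> {0, d, 1 - d}}"
  have cE: "countable E" unfolding E_def by (rule U_exc_countable[OF N d])
  show "AE x in lborel. (FF N d has_derivative (\<lambda>h. GG N d x \<bullet> h)) (at x)"
  proof (rule AE_I')
    show "{z::real\<times>real. fst z \<in> E} \<union> {z. snd z \<in> E} \<in> null_sets lborel"
      using null_fst[OF cE] null_snd[OF cE] by auto
    show "{x \<in> space lborel. \<not> (FF N d has_derivative (\<lambda>h. GG N d x \<bullet> h)) (at x)} \<subseteq> {z. fst z \<in> E} \<union> {z. snd z \<in> E}"
      using FF_deriv unfolding E_def by blast
  qed
qed

end

context fixes N :: nat and d :: real assumes N: "N > 0" and d: "0 < d" "d < 1/2" begin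

lemma Ub: "\<bar>U N d x\<bar> \<le> 1/d" using U_le[OF N d] U_nonneg[OF N d] by (simp add: abs_le_iff)

lemma U2b: "\<bar>(U N d x)^2\<bar> \<le> (1/d)^2"
  using power_mono[OF Ub[of x] abs_ge_zero, of 2] by (simp add: power2_abs)

lemma U'2b: "\<bar>(U' N d x)^2\<bar> \<le> (real N / d^2)^2"
  using power_mono[OF U'_bound[OF N d, of x] abs_ge_zero, of 2] by (simp add: power2_abs)

lemma onec: "\<bar>(\<lambda>_::real. 1::real) x\<bar> \<le> 1" by simp

lemma U2_meas: "(\<lambda>x. (U N d x)^2) \<in> borel_measurable borel"
  using U_meas[OF N d] by measurable
lemma U'2_meas: "(\<lambda>x. (U' N d x)^2) \<in> borel_measurable borel"
  using U'_meas[OF N d] by measurable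

lemmas tUU = tensor[OF U_meas[OF N d] Ub U_meas[OF N d] Ub]
lemmas t11 = tensor[OF borel_measurable_const onec borel_measurable_const onec, simplified]
lemmas tU2U2 = tensor[OF U2_meas U2b U2_meas U2b]
lemmas tU'2U2 = tensor[OF U'2_meas U'2b U2_meas U2b]
lemmas tU2U'2 = tensor[OF U2_meas U2b U'2_meas U'2b]

lemma iU: "integral {0..1} (U N d) = 1" using U_int[OF N d] by (rule integral_unique)
lemma iU2: "integral {0..1} (\<lambda>x. (U N d x)^2) = 2 / (3*d)" using U2_int[OF N d] by (rule integral_unique)
lemma iU'2: "integral {0..1} (\<lambda>x. (U' N d x)^2) = (real N)^2 * (2 / d^3)" using U'2_int[OF N d] by (rule integral_unique)

lemma FF_mean: "(LINT x:unit_square|lborel. FF N d x) = 0"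
proof -
  have "(LINT x:unit_square|lborel. FF N d x) = (LINT z:cbox (0,0) (1,1)|lborel. U N d (fst z) * U N d (snd z)) - (LINT z:cbox (0::real,0::real) (1,1)|lborel. 1)"
    unfolding unit_square_def FF_def by (rule set_integral_diff(2)[OF tUU(1) t11(1)])
  also have "\<dots> = 0" using tUU(2) t11(2) iU by simp
  finally show ?thesis .
qed

lemma FF_L1: "torus_L1 (FF N d) \<le> 2"
proof -
  have "torus_L1 (FF N d) \<le> (LINT z:cbox (0,0) (1,1)|lborel. U N d (fst z) * U N d (snd z) + 1)"
    unfolding torus_L1_def unit_square_def
  proof (rule set_integral_mono)
    show "set_integrable lborel (cbox (0, 0) (1, 1)) (\<lambda>z. U N d (fst z) * U N d (snd z) + 1)"
      by (rule set_integral_add(1)[OF tUU(1) t11(1)])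
    have "set_integrable lborel (cbox (0, 0) (1, 1)) (\<lambda>z. U N d (fst z) * U N d (snd z) - 1)"
      by (rule set_integral_diff(1)[OF tUU(1) t11(1)])
    then show "set_integrable lborel (cbox (0, 0) (1, 1)) (\<lambda>x. \<bar>FF N d x\<bar>)"
      unfolding FF_def[abs_def] set_integrable_def
    proof -
      assume "integrable lborel (\<lambda>x. indicat_real (cbox (0, 0) (1, 1)) x *\<^sub>R (U N d (fst x) * U N d (snd x) - 1))"
      from integrable_abs[OF this] show "integrable lborel (\<lambda>x. indicat_real (cbox (0, 0) (1, 1)) x *\<^sub>R \<bar>U N d (fst x) * U N d (snd x) - 1\<bar>)"
        by (simp add: abs_mult)
    qed
    show "\<bar>FF N d x\<bar> \<le> U N d (fst x) * U N d (snd x) + 1" for x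
      unfolding FF_def using U_nonneg[OF N d] by (simp add: abs_le_iff)
  qed
  also have "\<dots> = 2" using set_integral_add(2)[OF tUU(1) t11(1)] tUU(2) t11(2) iU by simp
  finally show ?thesis .
qed

lemma FF_L2: "torus_L2 (FF N d) = sqrt ((2 / (3*d))^2 - 1)"
proof -
  let ?S = "cbox (0::real,0::real) (1,1)"
  have eq: "(FF N d z)^2 = ((U N d (fst z))^2 * (U N d (snd z))^2 - 2 * (U N d (fst z) * U N d (snd z))) + 1" for z
    unfolding FF_def by (simp add: power2_eq_square algebra_simps)
  have i1: "set_integrable lborel ?S (\<lambda>z. 2 * (U N d (fst z) * U N d (snd z)))"
    using tUU(1) by simp
  have "(LINT z:?S|lborel. (FF N d z)^2) = (LINT z:?S|lborel. (U N d (fst z))^2 * (U N d (snd z))^2 - 2 * (U N d (fst z) * U N d (snd z))) + (LINT z:?S|lborel. 1)"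
    unfolding eq by (rule set_integral_add(2)[OF set_integral_diff(1)[OF tU2U2(1) i1] t11(1)])
  also have "\<dots> = (LINT z:?S|lborel. (U N d (fst z))^2 * (U N d (snd z))^2) - (LINT z:?S|lborel. 2 * (U N d (fst z) * U N d (snd z))) + 1"
    using set_integral_diff(2)[OF tU2U2(1) i1] t11(2) by simp
  also have "\<dots> = (2 / (3*d))^2 - 1"
    using tU2U2(2) tUU(2) iU iU2 by (simp add: power2_eq_square)
  finally show ?thesis unfolding torus_L2_def unit_square_def by simp
qed

lemma GG_L2: "torus_grad_L2 (GG N d) = sqrt (2 * (2 / (3*d)) * ((real N)^2 * (2 / d^3)))"
proof -
  let ?S = "cbox (0::real,0::real) (1,1)"
  have eq: "(norm (GG N d z))^2 = (U' N d (fst z))^2 * (U N d (snd z))^2 + (U N d (fst z))^2 * (U' N d (snd z))^2" for z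
    unfolding GG_def by (simp add: norm_Pair power_mult_distrib)
  have "(LINT z:?S|lborel. (norm (GG N d z))^2) = (LINT z:?S|lborel. (U' N d (fst z))^2 * (U N d (snd z))^2) + (LINT z:?S|lborel. (U N d (fst z))^2 * (U' N d (snd z))^2)"
    unfolding eq by (rule set_integral_add(2)[OF tU'2U2(1) tU2U'2(1)])
  also have "\<dots> = 2 * (2 / (3*d)) * ((real N)^2 * (2 / d^3))"
    using tU'2U2(2) tU2U'2(2) iU2 iU'2 by simp
  finally show ?thesis unfolding torus_grad_L2_def unit_square_def by simp
qed

end

context fixes N :: nat and d :: real assumes N: "N > 0" and d: "0 < d" "d < 1/2" begin

lemma FF_meas: "FF N d \<in> borel_measurable borel"
  unfolding FF_def[abs_def]
  using borel_measurable_diff[OF borel_measurable_times[OF meas_fst[OF U_meas[OF N d]] meas_snd[OF U_meas[OF N d]]] borel_measurable_const]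
  by simp

lemma FF_ball:
  assumes r: "r > 0"
  shows "(LINT y:ball p r|lborel. \<bar>FF N d y\<bar>) \<le>
     integral {fst p - r..fst p + r} (U N d) * integral {snd p - r..snd p + r} (U N d) + (2*r)*(2*r)"
proof -
  let ?B = "cbox (fst p - r, snd p - r) (fst p + r, snd p + r)"
  let ?g = "\<lambda>z. U N d (fst z) * U N d (snd z) + 1"
  have gi: "set_integrable lborel ?B ?g"
    by (rule set_integral_add(1)[OF tUU(1)[OF N d] t11(1)[OF N d]])
  have gm: "?g \<in> borel_measurable lborel"
    using borel_measurable_add[OF borel_measurable_times[OF meas_fst[OF U_meas[OF N d]] meas_snd[OF U_meas[OF N d]]] borel_measurable_const]
    by simp
  have gb: "\<bar>?g z\<bar> \<le> 1/d * (1/d) + 1" for z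
  proof -
    have "U N d (fst z) * U N d (snd z) \<le> 1/d * (1/d)"
      using U_le[OF N d] U_nonneg[OF N d] d by (intro mult_mono) auto
    moreover have "U N d (fst z) * U N d (snd z) \<ge> 0" using U_nonneg[OF N d] by simp
    ultimately show ?thesis by simp
  qed
  have bs: "ball p r \<in> sets lborel" by simp
  have bf: "emeasure lborel (ball p r) < \<infinity>" by (rule emeasure_bounded_finite) simp
  have gib: "set_integrable lborel (ball p r) ?g"
    by (rule bnd_set_int[OF bs bf gm gb])
  have fb: "\<bar>\<bar>FF N d z\<bar>\<bar> \<le> 1/d * (1/d) + 1" for z
  proof -
    have p: "0 \<le> U N d (fst z) * U N d (snd z)" using U_nonneg[OF N d] by simp
    have q: "U N d (fst z) * U N d (snd z) \<le> 1/d * (1/d) + 1" using gb[of z] p by simp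
    have "0 \<le> 1/d * (1/d)" using d by simp
    then show ?thesis using p q unfolding FF_def by (simp only: abs_abs abs_le_iff) linarith
  qed
  have fib: "set_integrable lborel (ball p r) (\<lambda>y. \<bar>FF N d y\<bar>)"
    by (rule bnd_set_int[OF bs bf _ fb]) (use FF_meas in simp)
  have "(LINT y:ball p r|lborel. \<bar>FF N d y\<bar>) \<le> (LINT y:ball p r|lborel. ?g y)"
    by (rule set_integral_mono[OF fib gib]) (use U_nonneg[OF N d] in \<open>simp add: FF_def abs_le_iff\<close>)
  also have "\<dots> \<le> (LINT y:?B|lborel. ?g y)"
    unfolding set_lebesgue_integral_def
  proof (rule integral_mono)
    show "integrable lborel (\<lambda>x. indicat_real (ball p r) x *\<^sub>R ?g x)" using gib unfolding set_integrable_def .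
    show "integrable lborel (\<lambda>x. indicat_real ?B x *\<^sub>R ?g x)" using gi unfolding set_integrable_def .
    fix z :: "real \<times> real"
    have sub: "ball p r \<subseteq> ?B"
    proof
      fix y assume "y \<in> ball p r"
      then have "dist p y < r" by simp
      moreover have "dist (fst p) (fst y) \<le> dist p y" "dist (snd p) (snd y) \<le> dist p y"
        by (rule dist_fst_le, rule dist_snd_le)
      ultimately show "y \<in> ?B" by (cases y) (auto simp: dist_real_def cbox_Pair_eq abs_le_iff)
    qed
    have "?g z \<ge> 0" using U_nonneg[OF N d] by simp
    then show "indicat_real (ball p r) z *\<^sub>R ?g z \<le> indicat_real ?B z *\<^sub>R ?g z"
      using sub by (auto simp: indicator_def)
  qed
  also have "\<dots> = integral {fst p - r..fst p + r} (U N d) * integral {snd p - r..snd p + r} (U N d) + (2*r)*(2*r)"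
    using set_integral_add(2)[OF tUU(1)[OF N d] t11(1)[OF N d]] tUU(2)[OF N d] t11(2)[OF N d] r by simp
  finally show ?thesis .
qed

lemma FF_ball2:
  assumes r: "r > 0"
  shows "(LINT y:ball p r|lborel. \<bar>FF N d y\<bar>) \<le> (min (2*r/d) (2*r + 2/real N))^2 + 4*r^2"
proof -
  let ?m = "min (2*r/d) (2*r + 2/real N)"
  have b: "integral {a - r..a + r} (U N d) \<le> ?m" "integral {a - r..a + r} (U N d) \<ge> 0" for a
  proof -
    show "integral {a - r..a + r} (U N d) \<le> ?m"
      using U_bound1[OF N d, of "a - r" "a + r"] U_bound2[OF N d, of "a - r" "a + r"] r by simp
    show "integral {a - r..a + r} (U N d) \<ge> 0"
      using U_nonneg[OF N d] by (intro integral_nonneg U_integrable[OF N d]) auto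
  qed
  have "integral {fst p - r..fst p + r} (U N d) * integral {snd p - r..snd p + r} (U N d) \<le> ?m * ?m"
    by (intro mult_mono b) (use b r d N in auto)
  with FF_ball[OF r, of p] show ?thesis by (simp add: power2_eq_square)
qed

end

lemma xlnx: "0 < x \<Longrightarrow> x * (- ln x) \<le> (1::real)"
proof -
  assume x: "0 < x"
  have "- ln x = ln (1/x)" using x by (simp add: ln_div)
  also have "\<dots> \<le> 1/x - 1" using x by (intro ln_le_minus_one) auto
  finally have "x * (- ln x) \<le> x * (1/x - 1)" using x by (intro mult_left_mono) auto
  also have "\<dots> = 1 - x" using x by (simp add: field_simps)
  finally show ?thesis using x by simp
qed

lemma sqrt_le1: "0 \<le> L \<Longrightarrow> sqrt L \<le> 1 + (L::real)"
  by (rule power2_le_imp_le) (auto simp: power2_eq_square algebra_simps)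

lemma sqrt_le_2N2: "0 \<le> L \<Longrightarrow> L \<le> 3 * N^4 \<Longrightarrow> sqrt L \<le> 2 * (N::real)^2"
proof -
  assume "0 \<le> L" "L \<le> 3 * N^4"
  then have "(sqrt L)^2 \<le> (2 * N^2)^2" by (simp add: power_mult_distrib power_mult[symmetric])
  then show ?thesis by (rule power2_le_imp_le) simp
qed

lemma sq_sum_le: "(a+b)^2 \<le> 2*a^2 + 2*(b::real)^2"
proof -
  have "0 \<le> (a-b)^2" by simp
  then show ?thesis by (simp add: power2_eq_square algebra_simps)
qed

lemma div_N2_le: "0 \<le> y \<Longrightarrow> 1 \<le> (M::real) \<Longrightarrow> y / M \<le> y"
proof -
  assume y: "0 \<le> y" and M: "1 \<le> M"
  have "y * 1 \<le> y * M" using mult_left_mono[OF M y] .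
  then show ?thesis using M by (simp add: divide_le_eq)
qed

lemma key_ineq:
  fixes N r :: real
  assumes N: "N \<ge> 1" and r: "0 < r" "r < 1/2"
  defines "d \<equiv> exp (- (N^4)) / 2"
  shows "((min (2*r/d) (2*r + 2/N))^2 + 4*r^2) * sqrt (- ln r) \<le> 25"
proof -
  define L where "L = - ln r"
  define m where "m = min (2*r/d) (2*r + 2/N)"
  have d0: "d > 0" unfolding d_def by simp
  have L0: "L > 0" unfolding L_def using r by simp
  have rL: "r * L \<le> 1" unfolding L_def using xlnx[OF r(1)] .
  have sL: "sqrt L \<le> 1 + L" using L0 by (intro sqrt_le1) simp
  have sL0: "sqrt L \<ge> 0" using L0 by simp
  have m0: "m \<ge> 0" unfolding m_def using r d0 N by simp
  have lnd: "ln d = - (N^4) - ln 2" unfolding d_def by (simp add: ln_div)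
  have ln2: "ln (2::real) \<le> 1" using ln_le_minus_one[of 2] by simp
  have ln2': "ln (2::real) \<ge> 0" by simp
  have lnN: "ln N \<le> N - 1" using ln_le_minus_one[of N] N by simp
  have lnN0: "ln N \<ge> 0" using N by simp
  have N4: "N \<le> N^4" using N by (metis one_le_numeral power_increasing power_one_right)
  have N2: "1 \<le> N^2" using N by (simp add: one_le_power)
  have part1: "4*r^2 * sqrt L \<le> 3"
  proof -
    have "4*r^2 * sqrt L \<le> 4*r^2 * (1 + L)" using sL by (intro mult_left_mono) auto
    also have "\<dots> = 4*r^2 + 4*r*(r*L)" by (simp add: algebra_simps power2_eq_square)
    also have "\<dots> \<le> 1 + 2 * 1"
    proof (intro add_mono mult_mono)
      show "4*r^2 \<le> 1" proof -
        have "r * r \<le> (1/2) * (1/2)" using r by (intro mult_mono) auto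
        then show ?thesis by (simp add: power2_eq_square)
      qed
    qed (use r rL L0 in auto)
    finally show ?thesis by simp
  qed
  have part2: "m^2 * sqrt L \<le> 22"
  proof (cases "r \<ge> d / N")
    case True
    have "L \<le> - ln (d / N)" unfolding L_def using True d0 N r by simp
    also have "\<dots> = ln N + N^4 + ln 2" using d0 N lnd by (simp add: ln_div)
    also have "\<dots> \<le> 3 * N^4" using lnN ln2 N4 N by linarith
    finally have "sqrt L \<le> 2 * N^2" using L0 by (intro sqrt_le_2N2) auto
    have "m \<le> 2*r + 2/N" unfolding m_def by simp
    then have "m^2 \<le> (2*r + 2/N)^2" using m0 by (intro power_mono) auto
    also have "\<dots> \<le> 2*(2*r)^2 + 2*(2/N)^2" by (rule sq_sum_le)
    also have "\<dots> = 8*r^2 + 8/N^2" by (simp add: power_divide power_mult_distrib)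
    finally have "m^2 * sqrt L \<le> (8*r^2 + 8/N^2) * sqrt L" using sL0 by (intro mult_right_mono) auto
    also have "\<dots> = 2 * (4*r^2 * sqrt L) + 8/N^2 * sqrt L" by (simp add: algebra_simps)
    also have "\<dots> \<le> 2 * 3 + 8/N^2 * (2 * N^2)"
      using part1 \<open>sqrt L \<le> 2 * N^2\<close> N by (intro add_mono mult_left_mono) auto
    also have "\<dots> = 22" using N by simp
    finally show ?thesis .
  next
    case False
    define t where "t = r * N / d"
    have t0: "0 < t" unfolding t_def using r d0 N by simp
    have t1: "t < 1" unfolding t_def using False d0 N by (simp add: field_simps)
    have rt: "r = t * d / N" unfolding t_def using d0 N by simp
    have "L = - ln t - ln d + ln N" unfolding L_def rt using t0 d0 N by (simp add: ln_div ln_mult)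
    also have "\<dots> = - ln t + (ln N + N^4 + ln 2)" using lnd by simp
    finally have Leq: "L = - ln t + (ln N + N^4 + ln 2)" .
    have lt0: "- ln t \<ge> 0" using t0 t1 by simp
    have X0: "0 \<le> ln N + N^4 + ln 2" using lnN0 ln2' by simp
    have X1: "ln N + N^4 + ln 2 \<le> 3 * N^4" using lnN ln2 N4 N by linarith
    have "sqrt L \<le> sqrt (- ln t) + sqrt (ln N + N^4 + ln 2)" unfolding Leq
      by (rule sqrt_add_le_add_sqrt[OF lt0 X0])
    also have "\<dots> \<le> (1 + (- ln t)) + 2 * N^2"
      by (intro add_mono sqrt_le1 sqrt_le_2N2 lt0 X0 X1)
    finally have sLb: "sqrt L \<le> 1 + (- ln t) + 2 * N^2" .
    have "m \<le> 2 * r / d" unfolding m_def by simp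
    also have "\<dots> = 2 * t / N" unfolding rt using d0 by simp
    finally have "m^2 \<le> (2 * t / N)^2" using m0 by (intro power_mono) auto
    then have "m^2 * sqrt L \<le> (2 * t / N)^2 * (1 + (- ln t) + 2 * N^2)"
      using sLb sL0 m0 by (intro mult_mono) auto
    also have "\<dots> = 4 * t^2 / N^2 + 4 * t * (t * (- ln t)) / N^2 + 8 * t^2"
      using N by (simp add: field_simps power2_eq_square)
    also have "\<dots> \<le> 4 + 4 + 8"
    proof (intro add_mono)
      have tt: "t^2 \<le> 1" using t0 t1 by (simp add: power_le_one)
      show "4 * t^2 / N^2 \<le> 4" using div_N2_le[of "4 * t^2" "N^2"] tt N2 by simp
      show "8 * t^2 \<le> 8" using tt by simp
      have a: "t * (- ln t) \<le> 1" using xlnx[OF t0] .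
      have b: "t * (- ln t) \<ge> 0" using t0 lt0 by (intro mult_nonneg_nonneg) auto
      have "t * (t * (- ln t)) \<le> 1 * 1" using a b t0 t1 by (intro mult_mono) auto
      then have "4 * t * (t * (- ln t)) \<le> 4" by simp
      moreover have "4 * t * (t * (- ln t)) / N^2 \<le> 4 * t * (t * (- ln t))"
      proof (rule div_N2_le[OF _ N2])
        show "0 \<le> 4 * t * (t * (- ln t))" using b t0 t1 by (intro mult_nonneg_nonneg) auto
      qed
      ultimately show "4 * t * (t * (- ln t)) / N^2 \<le> 4" by linarith
    qed
    finally show ?thesis by simp
  qed
  have "(m^2 + 4*r^2) * sqrt L = m^2 * sqrt L + 4*r^2 * sqrt L" by (simp add: algebra_simps)
  also have "\<dots> \<le> 25" using part1 part2 by simp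
  finally show ?thesis unfolding m_def L_def .
qed


lemma S_bounds:
  fixes N :: real
  assumes N: "N \<ge> 1"
  defines "d \<equiv> exp (- (N^4)) / 2"
  defines "A \<equiv> 2 / (3*d)"
  defines "G \<equiv> sqrt (2 * A * (N^2 * (2 / d^3)))"
  shows "7/72 \<le> (sqrt (A^2 - 1))^2 * root 4 (ln G) / G"
    and "(sqrt (A^2 - 1))^2 * root 4 (ln G) / G \<le> 8/9"
proof -
  have d0: "d > 0" unfolding d_def by simp
  have e1: "exp (- (N^4)) \<le> 1" using N by simp
  have d1: "d \<le> 1/2" unfolding d_def using e1 by simp
  have dd: "d^2 \<le> 1/4" using power_mono[OF d1, of 2] d0 by (simp add: power2_eq_square)
  define P where "P = (A^2 - 1) * d^2"
  have Peq: "P = 4/9 - d^2" unfolding P_def A_def using d0 by (simp add: field_simps power2_eq_square)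
  have P1: "7/36 \<le> P" "P \<le> 4/9" using Peq dd d0 by auto
  have "0 < (A^2 - 1) * d^2" using P1 unfolding P_def by linarith
  then have A1: "A^2 - 1 \<ge> 0" using d0 by (simp add: zero_less_mult_iff)
  have sqA: "(sqrt (A^2 - 1))^2 = P / d^2" using A1 d0 unfolding P_def by simp
  define q where "q = sqrt (8/3)"
  have q1: "1 \<le> q" "q \<le> 2"
  proof -
    show "1 \<le> q" unfolding q_def by (rule real_le_rsqrt) simp
    have "sqrt (8/3) \<le> sqrt ((2::real)^2)" by (subst real_sqrt_le_iff) simp
    then show "q \<le> 2" unfolding q_def by simp
  qed
  have Geq: "G = q * N / d^2"
  proof -
    have "2 * A * (N^2 * (2 / d^3)) = (8/3) * (N / d^2)^2"
      unfolding A_def using d0 by (simp add: field_simps power2_eq_square eval_nat_numeral)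
    then have "G = sqrt ((8/3) * (N / d^2)^2)" unfolding G_def by (simp only:)
    also have "\<dots> = sqrt (8/3) * \<bar>N / d^2\<bar>" by (simp only: real_sqrt_mult real_sqrt_abs)
    also have "\<bar>N / d^2\<bar> = N / d^2" using N d0 by simp
    finally show ?thesis unfolding q_def by simp
  qed
  have G0: "G > 0" unfolding Geq using q1 N d0 by simp
  have lnd: "ln d = - (N^4) - ln 2" unfolding d_def by (simp add: ln_div)
  have lnG: "ln G = ln q + ln N + 2 * N^4 + 2 * ln 2"
    unfolding Geq using q1 N d0 lnd by (simp add: ln_div ln_mult ln_realpow)
  have ln2: "ln (2::real) \<le> 1" using ln_le_minus_one[of 2] by simp
  have lnq: "ln q \<le> 1" "ln q \<ge> 0" using ln_le_minus_one[of q] q1 by auto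
  have lnN: "ln N \<le> N" "ln N \<ge> 0" using ln_le_minus_one[of N] N by auto
  have N4: "N \<le> N^4" "1 \<le> N^4" using N by (metis one_le_numeral power_increasing power_one_right, simp add: one_le_power)
  have ln2': "ln (2::real) \<ge> 0" by simp
  have lo: "N^4 \<le> ln G" unfolding lnG using lnq lnN ln2' N4 by linarith
  have hi: "ln G \<le> 16 * N^4" unfolding lnG using lnq lnN ln2 N4 by linarith
  define \<rho> where "\<rho> = root 4 (ln G) / N"
  have r1: "root 4 (N^4) \<le> root 4 (ln G)" using lo by simp
  have "(2*N)^4 = 16 * N^4" by (simp add: power_mult_distrib)
  then have r2: "root 4 (ln G) \<le> root 4 ((2*N)^4)" using hi by simp
  have rN: "root 4 (N^4) = N" using N by (simp add: real_root_power_cancel)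
  have r2N: "root 4 ((2*N)^4) = 2*N" by (rule real_root_power_cancel) (use N in auto)
  have r1': "N \<le> root 4 (ln G)" using r1 by (simp only: rN)
  have r2': "root 4 (ln G) \<le> 2 * N" using r2 by (simp only: r2N)
  have rho1: "1 \<le> \<rho>" "\<rho> \<le> 2" unfolding \<rho>_def using r1' r2' N by (simp_all add: divide_le_eq le_divide_eq)
  have Seq: "(sqrt (A^2 - 1))^2 * root 4 (ln G) / G = P * \<rho> / q"
    unfolding sqA Geq \<rho>_def using d0 N q1 by (simp add: field_simps)
  have P0: "P \<ge> 0" using P1 by simp
  show "7/72 \<le> (sqrt (A^2 - 1))^2 * root 4 (ln G) / G"
  proof -
    have "(7::real)/72 = (7/36) * 1 / 2" by simp
    also have "\<dots> \<le> P * \<rho> / 2" using P1 rho1 by (intro divide_right_mono mult_mono) auto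
    also have "\<dots> \<le> P * \<rho> / q" using q1 P0 rho1 by (intro divide_left_mono mult_nonneg_nonneg) auto
    finally show ?thesis unfolding Seq .
  qed
  show "(sqrt (A^2 - 1))^2 * root 4 (ln G) / G \<le> 8/9"
  proof -
    have "P * \<rho> / q \<le> P * \<rho> / 1" using q1 P0 rho1 by (intro divide_left_mono mult_nonneg_nonneg) auto
    also have "\<dots> \<le> (4/9) * 2" using P1 rho1 P0 by (simp only: div_by_1, intro mult_mono) auto
    finally show ?thesis unfolding Seq by simp
  qed
qed


definition dd :: "nat \<Rightarrow> real" where "dd n = exp (- ((real (Suc n))^4)) / 2"

lemma dd_pos: "0 < dd n" unfolding dd_def by simp
lemma dd_half: "dd n < 1/2"
proof -
  have "exp (- ((real (Suc n))^4)) < 1" by simp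
  then show ?thesis unfolding dd_def by simp
qed

lemma NSuc: "Suc n > 0" by simp

theorem proposition2p5:
  shows "\<exists>(f :: nat \<Rightarrow> real \<times> real \<Rightarrow> real) (g :: nat \<Rightarrow> real \<times> real \<Rightarrow> real \<times> real) C B.
     (\<forall>n. W1inf_torus (f n) (g n)) \<and>
     (\<forall>n. (LINT x:unit_square|lborel. f n x) = 0) \<and>
     (\<forall>n. torus_L1 (f n) \<le> B) \<and>
     C > 0 \<and>
     (\<forall>r \<in> {0<..<1/2}. (\<forall>n. torusM (f n) r \<le> C / sqrt \<bar>ln r\<bar>)) \<and>
     filterlim (\<lambda>n. torus_L2 (f n)) at_top sequentially \<and>
     (let S = (\<lambda>n. (torus_L2 (f n))\<^sup>2 * root 4 (ln (torus_grad_L2 (g n))) / torus_grad_L2 (g n))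
      in 0 < liminf (\<lambda>n. ereal (S n)) \<and> limsup (\<lambda>n. ereal (S n)) < \<infinity>)"
proof -
  define f where "f n = FF (Suc n) (dd n)" for n
  define g where "g n = GG (Suc n) (dd n)" for n
  note ctx = NSuc dd_pos dd_half
  have W: "\<forall>n. W1inf_torus (f n) (g n)" unfolding f_def g_def using FF_W1inf[OF ctx] by simp
  have M: "\<forall>n. (LINT x:unit_square|lborel. f n x) = 0" unfolding f_def using FF_mean[OF ctx] by simp
  have L1: "\<forall>n. torus_L1 (f n) \<le> 2" unfolding f_def using FF_L1[OF ctx] by simp
  have Mb: "\<forall>r \<in> {0<..<1/2}. (\<forall>n. torusM (f n) r \<le> 25 / sqrt \<bar>ln r\<bar>)"
  proof (intro ballI allI)
    fix r n assume r: "r \<in> {0<..<(1/2::real)}"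
    then have r0: "0 < r" "r < 1/2" by auto
    have lnr: "\<bar>ln r\<bar> = - ln r" using r0 by simp
    have sp: "sqrt (- ln r) > 0" using r0 by simp
    have key: "((min (2*r/dd n) (2*r + 2/real (Suc n)))^2 + 4*r^2) * sqrt (- ln r) \<le> 25"
      unfolding dd_def by (rule key_ineq) (use r0 in auto)
    then have key': "(min (2*r/dd n) (2*r + 2/real (Suc n)))^2 + 4*r^2 \<le> 25 / sqrt (- ln r)"
      using sp by (simp add: le_divide_eq)
    show "torusM (f n) r \<le> 25 / sqrt \<bar>ln r\<bar>"
      unfolding torusM_def lnr
    proof (rule cSUP_least)
      fix x :: "real \<times> real"
      show "(LINT y:ball x r|lborel. \<bar>f n y\<bar>) \<le> 25 / sqrt (- ln r)"
        unfolding f_def using FF_ball2[OF NSuc[of n] dd_pos[of n] dd_half[of n] r0(1), of x] key' by linarith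
    qed simp
  qed
  have L2eq: "torus_L2 (f n) = sqrt ((2 / (3 * dd n))^2 - 1)" for n
    unfolding f_def by (rule FF_L2[OF ctx])
  have G2eq: "torus_grad_L2 (g n) = sqrt (2 * (2 / (3 * dd n)) * ((real (Suc n))^2 * (2 / (dd n)^3)))" for n
    unfolding g_def by (rule GG_L2[OF ctx])
  have Sb: "7/72 \<le> (torus_L2 (f n))\<^sup>2 * root 4 (ln (torus_grad_L2 (g n))) / torus_grad_L2 (g n)"
          "(torus_L2 (f n))\<^sup>2 * root 4 (ln (torus_grad_L2 (g n))) / torus_grad_L2 (g n) \<le> 8/9" for n
    unfolding L2eq G2eq dd_def by (rule S_bounds; simp)+
  have lim: "filterlim (\<lambda>n. torus_L2 (f n)) at_top sequentially"
  proof (rule filterlim_at_top_mono[OF filterlim_real_sequentially], rule always_eventually, rule allI)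
    fix n
    let ?N = "real (Suc n)"
    have X: "1 + ?N^4 \<le> exp (?N^4)" by (rule exp_ge_add_one_self)
    have Y: "?N \<le> ?N^4" using power_increasing[of 1 4 ?N] by simp
    have Z: "2 / (3 * dd n) = (4/3) * exp (?N^4)"
    proof -
      have e: "exp (- (?N^4)) = 1 / exp (?N^4)" by (simp add: exp_minus inverse_eq_divide)
      show ?thesis unfolding dd_def e by simp
    qed
    have NN: "?N = real n + 1" by simp
    have A: "real n + 1 \<le> 2 / (3 * dd n)" unfolding Z using X Y NN by linarith
    have "(real n)^2 \<le> (real n + 1)^2 - 1" by (simp add: power2_eq_square algebra_simps)
    also have "(real n + 1)^2 \<le> (2 / (3 * dd n))^2" using A by (intro power_mono) auto
    finally have "(real n)^2 \<le> (2 / (3 * dd n))^2 - 1" by simp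
    then have "sqrt ((real n)^2) \<le> sqrt ((2 / (3 * dd n))^2 - 1)" by (subst real_sqrt_le_iff) simp
    then show "real n \<le> torus_L2 (f n)" unfolding L2eq by simp
  qed
  have S: "let S = (\<lambda>n. (torus_L2 (f n))\<^sup>2 * root 4 (ln (torus_grad_L2 (g n))) / torus_grad_L2 (g n))
      in 0 < liminf (\<lambda>n. ereal (S n)) \<and> limsup (\<lambda>n. ereal (S n)) < \<infinity>"
    unfolding Let_def
  proof
    have "ereal (7/72) \<le> liminf (\<lambda>n. ereal ((torus_L2 (f n))\<^sup>2 * root 4 (ln (torus_grad_L2 (g n))) / torus_grad_L2 (g n)))"
      by (rule Liminf_bounded, rule always_eventually) (use Sb(1) in simp)
    then show "0 < liminf (\<lambda>n. ereal ((torus_L2 (f n))\<^sup>2 * root 4 (ln (torus_grad_L2 (g n))) / torus_grad_L2 (g n)))"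
      by (rule less_le_trans[rotated]) simp
    have "limsup (\<lambda>n. ereal ((torus_L2 (f n))\<^sup>2 * root 4 (ln (torus_grad_L2 (g n))) / torus_grad_L2 (g n))) \<le> ereal (8/9)"
      by (rule Limsup_bounded, rule always_eventually) (use Sb(2) in simp)
    then show "limsup (\<lambda>n. ereal ((torus_L2 (f n))\<^sup>2 * root 4 (ln (torus_grad_L2 (g n))) / torus_grad_L2 (g n))) < \<infinity>"
      by (rule le_less_trans) simp
  qed
  show ?thesis
    by (rule exI[of _ f], rule exI[of _ g], rule exI[of _ 25], rule exI[of _ 2])
       (use W M L1 Mb lim S in simp)
qed



end
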